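(* Let $\alpha>0$, $\alpha\neq1$. For every unitary $U\in\mathcal{U}(d)$, $H_\alpha(U)=0$ if and only if $U$ belongs to the Clifford group $\mathcal{C}_n(d_L)$.
   Context: Let $d_L\ge 2$, $n\ge1$, $d=d_L^n$. On $\mathbb{C}^{d_L}$ with computational basis $\{|k\rangle\}_{k\in\mathbb{Z}_{d_L}}$, let $Z|k\rangle=\omega^k|k\rangle$, $X|k\rangle=|k+1\rangle$ (mod $d_L$), $\omega=e^{2\pi i/d_L}$, $\tau=-e^{i\pi/d_L}$, $D_{(a_1,a_2)}=\tau^{a_1a_2}X^{a_1}Z^{a_2}$, and for $\mathbf a=\mathbf a_1\oplus\cdots\oplus\mathbf a_n\in\mathbb{Z}_{d_L}^{2n}$ let $D_{\mathbf a}=D_{\mathbf a_1}\otimes\cdots\otimes D_{\mathbf a_n}$ acting on $\mathbb{C}^d$. The Clifford group $\mathcal{C}_n(d_L)$ is the set of unitaries $C$ on $\mathbb{C}^d$ such that for every $\mathbf a$ there exist $s\in\mathbb{Z}_{d_L}$ and $\mathbf a'$ with $CD_{\mathbf a}C^\dagger=\omega^sD_{\mathbf a'}$. For a unitary $U$ let $\mathfrak{C}_{\mathbf{ab}}(U)=\frac1d\operatorname{tr}(D_{\mathbf a}^\dagger UD_{\mathbf b}U^\dagger)$, $\mathfrak{D}_{\mathbf{ab}}(U)=|\mathfrak{C}_{\mathbf{ab}}(U)|^2$, and the $\alpha$-Clifford entropy $H_\alpha(U)=\frac{1}{\alpha-1}\Big(1-\frac{1}{d^2}\sum_{\mathbf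 a,\mathbf b\in\mathbb{Z}_{d_L}^{2n}}\mathfrak{D}_{\mathbf{ab}}(U)^\alpha\Big)$. *)

theory Defs
  imports Complex_Main "Jordan_Normal_Form.Matrix"
begin

definition adj :: "complex mat \<Rightarrow> complex mat" where
  "adj M = mat (dim_col M) (dim_row M) (\<lambda>(i,j). cnj (M $$ (j,i)))"

definition mtrace :: "complex mat \<Rightarrow> complex" where
  "mtrace M = (\<Sum>i<dim_row M. M $$ (i,i))"

definition unitary_mat :: "nat \<Rightarrow> complex mat \<Rightarrow> bool" where
  "unitary_mat m U \<longleftrightarrow> U \<in> carrier_mat m m \<and> U * adj U = 1\<^sub>m m \<and> adj U * U = 1\<^sub>m m"

(* Kronecker (tensor) product; the first factor is the most significant digit *)
definition kron :: "complex mat \<Rightarrow> complex mat \<Rightarrow> complex mat" where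
  "kron A B = mat (dim_row A * dim_row B) (dim_col A * dim_col B)
     (\<lambda>(i,j). A $$ (i div dim_row B, j div dim_col B) * B $$ (i mod dim_row B, j mod dim_col B))"

definition omega :: "nat \<Rightarrow> complex" where
  "omega dL = exp (2 * pi * \<i> / of_nat dL)"

definition tau :: "nat \<Rightarrow> complex" where
  "tau dL = - exp (pi * \<i> / of_nat dL)"

definition Zop :: "nat \<Rightarrow> complex mat" where
  "Zop dL = mat dL dL (\<lambda>(j,k). if j = k then omega dL ^ k else 0)"

definition Xop :: "nat \<Rightarrow> complex mat" where
  "Xop dL = mat dL dL (\<lambda>(j,k). if j = (k + 1) mod dL then 1 else 0)"

definition D1 :: "nat \<Rightarrow> nat \<times> nat \<Rightarrow> complex mat" where
  "D1 dL a = (tau dL ^ (fst a * snd a)) \<cdot>\<^sub>m ((Xop dL ^\<^sub>m fst a) * (Zop dL ^\<^sub>m snd a))"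

(* a = a_1 (+) ... (+) a_n, represented as the list [a_1,...,a_n] of pairs *)
definition Dop :: "nat \<Rightarrow> (nat \<times> nat) list \<Rightarrow> complex mat" where
  "Dop dL a = foldr (\<lambda>p M. kron (D1 dL p) M) a (1\<^sub>m 1)"

definition pts :: "nat \<Rightarrow> nat \<Rightarrow> (nat \<times> nat) list set" where
  "pts dL n = {a. length a = n \<and> (\<forall>p\<in>set a. fst p < dL \<and> snd p < dL)}"

definition clifford_group :: "nat \<Rightarrow> nat \<Rightarrow> complex mat set" where
  "clifford_group dL n = {C. unitary_mat (dL ^ n) C \<and>
     (\<forall>a\<in>pts dL n. \<exists>s<dL. \<exists>a'\<in>pts dL n.
        C * Dop dL a * adj C = (omega dL ^ s) \<cdot>\<^sub>m Dop dL a')}"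

definition charC :: "nat \<Rightarrow> nat \<Rightarrow> complex mat \<Rightarrow> (nat \<times> nat) list \<Rightarrow> (nat \<times> nat) list \<Rightarrow> complex" where
  "charC dL n U a b = mtrace (adj (Dop dL a) * U * Dop dL b * adj U) / of_nat (dL ^ n)"

definition charD :: "nat \<Rightarrow> nat \<Rightarrow> complex mat \<Rightarrow> (nat \<times> nat) list \<Rightarrow> (nat \<times> nat) list \<Rightarrow> real" where
  "charD dL n U a b = (cmod (charC dL n U a b))\<^sup>2"

definition clifford_entropy :: "nat \<Rightarrow> nat \<Rightarrow> real \<Rightarrow> complex mat \<Rightarrow> real" where
  "clifford_entropy dL n \<alpha> U = 1 / (\<alpha> - 1) *
     (1 - 1 / (real (dL ^ n))\<^sup>2 * (\<Sum>a\<in>pts dL n. \<Sum>b\<in>pts dL n. charD dL n U a b powr \<alpha>))"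

end

theory Submission
  imports Defs
begin

lemma mult_entry:
  assumes "A \<in> carrier_mat r k" "B \<in> carrier_mat k c" "i < r" "j < c"
  shows "(A * B) $$ (i,j) = (\<Sum>l<k. A $$ (i,l) * B $$ (l,j))"
  using assms by (auto simp: scalar_prod_def lessThan_atLeast0)

lemma adj_dim[simp]: "dim_row (adj A) = dim_col A" "dim_col (adj A) = dim_row A"
  by (auto simp: adj_def)

lemma adj_index[simp]: "i < dim_col A \<Longrightarrow> j < dim_row A \<Longrightarrow> adj A $$ (i,j) = cnj (A $$ (j,i))"
  by (auto simp: adj_def)

lemma adj_carrier: assumes "A \<in> carrier_mat r c" shows "adj A \<in> carrier_mat c r"
  using carrier_matD[OF assms] by (intro carrier_matI) simp_all

lemma adj_adj[simp]: "adj (adj A) = A"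
  by (rule eq_matI) auto

lemma adj_mult:
  assumes "A \<in> carrier_mat r k" "B \<in> carrier_mat k c"
  shows "adj (A * B) = adj B * adj A"
proof (rule eq_matI)
  fix i j assume "i < dim_row (adj B * adj A)" "j < dim_col (adj B * adj A)"
  then have ij: "i < c" "j < r" using assms by auto
  have "adj (A * B) $$ (i,j) = cnj ((A*B) $$ (j,i))" using ij assms by auto
  also have "\<dots> = (\<Sum>l<k. cnj (A $$ (j,l)) * cnj (B $$ (l,i)))"
    using ij assms by (simp add: mult_entry[OF assms(1,2) ij(2,1)] cnj_sum)
  also have "\<dots> = (adj B * adj A) $$ (i,j)"
    using ij assms by (subst mult_entry[OF adj_carrier adj_carrier]) (auto simp: mult.commute)
  finally show "adj (A * B) $$ (i,j) = (adj B * adj A) $$ (i,j)" .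
qed (use assms in auto)

lemma adj_smult: "adj (c \<cdot>\<^sub>m A) = cnj c \<cdot>\<^sub>m adj A"
  by (rule eq_matI) auto

lemma mtrace_comm:
  assumes "A \<in> carrier_mat r c" "B \<in> carrier_mat c r"
  shows "mtrace (A * B) = mtrace (B * A)"
proof -
  have "mtrace (A * B) = (\<Sum>i<r. (A*B) $$ (i,i))" unfolding mtrace_def using assms by simp
  also have "\<dots> = (\<Sum>i<r. \<Sum>l<c. A $$ (i,l) * B $$ (l,i))"
    by (rule sum.cong[OF refl], rule mult_entry[OF assms], auto)
  also have "\<dots> = (\<Sum>l<c. \<Sum>i<r. B $$ (l,i) * A $$ (i,l))"
    by (subst sum.swap) (simp add: mult.commute)
  also have "\<dots> = (\<Sum>i<c. (B*A) $$ (i,i))"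
    by (rule sum.cong[OF refl], rule mult_entry[OF assms(2,1), symmetric], auto)
  also have "\<dots> = mtrace (B * A)" unfolding mtrace_def using assms by simp
  finally show ?thesis .
qed

lemma mtrace_one[simp]: "mtrace (1\<^sub>m n) = of_nat n"
  by (simp add: mtrace_def)

definition hs :: "complex mat \<Rightarrow> complex mat \<Rightarrow> complex" where
  "hs X M = (\<Sum>i<dim_row X. \<Sum>j<dim_col X. cnj (X $$ (i,j)) * M $$ (i,j))"

definition fro :: "complex mat \<Rightarrow> real" where
  "fro M = (\<Sum>i<dim_row M. \<Sum>j<dim_col M. (cmod (M $$ (i,j)))\<^sup>2)"

lemma hs_trace:
  assumes "X \<in> carrier_mat r c" "M \<in> carrier_mat r c"
  shows "mtrace (adj X * M) = hs X M"
proof -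
  have "mtrace (adj X * M) = (\<Sum>j<c. (adj X * M) $$ (j,j))" unfolding mtrace_def using assms by simp
  also have "\<dots> = (\<Sum>j<c. \<Sum>i<r. cnj (X $$ (i,j)) * M $$ (i,j))"
    by (rule sum.cong[OF refl], subst mult_entry[OF adj_carrier[OF assms(1)] assms(2)])
       (use assms in auto)
  also have "\<dots> = hs X M" unfolding hs_def using assms by (subst sum.swap) auto
  finally show ?thesis .
qed

lemma hs_self: "hs M M = of_real (fro M)"
proof -
  have e: "cnj z * z = complex_of_real ((cmod z)^2)" for z
    by (simp add: complex_norm_square mult.commute del: of_real_power)
  show ?thesis unfolding hs_def fro_def of_real_sum by (simp only: e)
qed

lemma fro_nonneg: "fro M \<ge> 0"
  unfolding fro_def by (intro sum_nonneg) auto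

lemma hs_smult: "dim_row M = dim_row X \<Longrightarrow> dim_col M = dim_col X \<Longrightarrow> hs X (c \<cdot>\<^sub>m M) = c * hs X M"
  unfolding hs_def by (simp add: sum_distrib_left ac_simps)

lemma hs_minus:
  assumes "M \<in> carrier_mat r c" "N \<in> carrier_mat r c" "X \<in> carrier_mat r c"
  shows "hs X (M - N) = hs X M - hs X N"
  unfolding hs_def using assms by (simp add: sum_subtractf right_diff_distrib)

lemma fro_zero:
  assumes "fro M = 0" "i < dim_row M" "j < dim_col M"
  shows "M $$ (i,j) = 0"
proof -
  have "(\<Sum>j<dim_col M. (cmod (M $$ (i,j)))\<^sup>2) = 0"
    using assms(1,2) unfolding fro_def
    by (subst (asm) sum_nonneg_eq_0_iff) (auto intro: sum_nonneg)
  then have "(cmod (M $$ (i,j)))\<^sup>2 = 0"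
    using assms(3) by (subst (asm) sum_nonneg_eq_0_iff) auto
  then show ?thesis by simp
qed

lemma sum_prod_nat:
  fixes f :: "nat \<Rightarrow> 'a::comm_monoid_add"
  shows "(\<Sum>k<m*n. f k) = (\<Sum>i<m. \<Sum>j<n. f (i*n + j))"
proof -
  have "(\<Sum>k<m*n. f k) = (\<Sum>i<m. sum f {i*n..<i*n+n})"
    by (rule sum.nat_group[symmetric])
  also have "\<dots> = (\<Sum>i<m. \<Sum>j<n. f (i*n + j))"
  proof (rule sum.cong[OF refl])
    fix i
    have "sum f {0 + i*n..<n + i*n} = (\<Sum>j=0..<n. f (j + i*n))" by (rule sum.shift_bounds_nat_ivl)
    moreover have "{i*n..<i*n+n} = {0 + i*n..<n + i*n}" by (simp add: add.commute)
    moreover have "(\<Sum>j=0..<n. f (j + i*n)) = (\<Sum>j<n. f (i*n + j))"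
      by (simp add: atLeast0LessThan add.commute)
    ultimately show "sum f {i*n..<i*n+n} = (\<Sum>j<n. f (i*n + j))" by simp
  qed
  finally show ?thesis .
qed

lemma kron_dim[simp]:
  "dim_row (kron A B) = dim_row A * dim_row B" "dim_col (kron A B) = dim_col A * dim_col B"
  by (auto simp: kron_def)

lemma kron_carrier:
  assumes "A \<in> carrier_mat ra ca" "B \<in> carrier_mat rb cb" shows "kron A B \<in> carrier_mat (ra*rb) (ca*cb)"
  using carrier_matD[OF assms(1)] carrier_matD[OF assms(2)] by (intro carrier_matI) simp_all

lemma kron_index:
  "i < dim_row A * dim_row B \<Longrightarrow> j < dim_col A * dim_col B \<Longrightarrow>
   kron A B $$ (i,j) = A $$ (i div dim_row B, j div dim_col B) * B $$ (i mod dim_row B, j mod dim_col B)"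
  by (auto simp: kron_def)

lemma idx_less: "i < (m::nat) \<Longrightarrow> k < n \<Longrightarrow> i*n+k < m*n"
proof -
  assume a: "i < m" "k < n"
  have "Suc i * n \<le> m*n" using a by (intro mult_le_mono1) simp
  then have "i*n + n \<le> m*n" by simp
  then show ?thesis using a by linarith
qed

lemma kron_index2:
  assumes "A \<in> carrier_mat ra ca" "B \<in> carrier_mat rb cb" "i < ra" "k < rb" "j < ca" "l < cb"
  shows "kron A B $$ (i*rb+k, j*cb+l) = A $$ (i,j) * B $$ (k,l)"
  using assms by (subst kron_index) (auto simp: idx_less)

lemma kron_index3:
  "i < dim_row A \<Longrightarrow> k < dim_row B \<Longrightarrow> j < dim_col A \<Longrightarrow> l < dim_col B \<Longrightarrow>
   kron A B $$ (i*dim_row B+k, j*dim_col B+l) = A $$ (i,j) * B $$ (k,l)"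
  by (rule kron_index2[OF carrier_matI[OF refl refl] carrier_matI[OF refl refl]])

lemma kron_mult:
  assumes A: "A \<in> carrier_mat ra ka" and C: "C \<in> carrier_mat ka ca"
    and B: "B \<in> carrier_mat rb kb" and D: "D \<in> carrier_mat kb cb"
  shows "kron A B * kron C D = kron (A * C) (B * D)"
proof (rule eq_matI)
  fix i j assume "i < dim_row (kron (A * C) (B * D))" "j < dim_col (kron (A * C) (B * D))"
  then have ij: "i < ra * rb" "j < ca * cb" using assms by auto
  then have pos: "rb > 0" "cb > 0" by (auto intro: Nat.gr0I)
  have i1: "i div rb < ra" "i mod rb < rb" using ij pos by (auto simp: less_mult_imp_div_less)
  have j1: "j div cb < ca" "j mod cb < cb" using ij pos by (auto simp: less_mult_imp_div_less)
  have "(kron A B * kron C D) $$ (i,j) = (\<Sum>l<ka*kb. kron A B $$ (i,l) * kron C D $$ (l,j))"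
    by (rule mult_entry[OF kron_carrier[OF A B] kron_carrier[OF C D] ij])
  also have "\<dots> = (\<Sum>l1<ka. \<Sum>l2<kb. kron A B $$ (i,l1*kb+l2) * kron C D $$ (l1*kb+l2,j))"
    by (rule sum_prod_nat)
  also have "\<dots> = (\<Sum>l1<ka. \<Sum>l2<kb. (A $$ (i div rb, l1) * C $$ (l1, j div cb)) *
       (B $$ (i mod rb, l2) * D $$ (l2, j mod cb)))"
  proof (rule sum.cong[OF refl], rule sum.cong[OF refl])
    fix l1 l2 assume l: "l1 \<in> {..<ka}" "l2 \<in> {..<kb}"
    then have l': "l1 < ka" "l2 < kb" by auto
    have "kron A B $$ (i,l1*kb+l2) = A $$ (i div rb, l1) * B $$ (i mod rb, l2)"
      using kron_index2[OF A B i1 l'] by (simp only: div_mult_mod_eq)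
    moreover have "kron C D $$ (l1*kb+l2,j) = C $$ (l1, j div cb) * D $$ (l2, j mod cb)"
      using kron_index2[OF C D l'(1) l'(2) j1] by (simp only: div_mult_mod_eq)
    ultimately show "kron A B $$ (i,l1*kb+l2) * kron C D $$ (l1*kb+l2,j) =
       (A $$ (i div rb, l1) * C $$ (l1, j div cb)) * (B $$ (i mod rb, l2) * D $$ (l2, j mod cb))"
      by (simp only: ac_simps)
  qed
  also have "\<dots> = (\<Sum>l1<ka. A $$ (i div rb, l1) * C $$ (l1, j div cb)) *
       (\<Sum>l2<kb. B $$ (i mod rb, l2) * D $$ (l2, j mod cb))"
    by (rule sum_product[symmetric])
  also have "\<dots> = (A*C)$$(i div rb, j div cb) * (B*D)$$(i mod rb, j mod cb)"
    by (simp only: mult_entry[OF A C i1(1) j1(1)] mult_entry[OF B D i1(2) j1(2)])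
  also have "\<dots> = kron (A * C) (B * D) $$ (i,j)"
    using kron_index2[OF mult_carrier_mat[OF A C] mult_carrier_mat[OF B D] i1(1) i1(2) j1(1) j1(2)]
    by (simp only: div_mult_mod_eq)
  finally show "(kron A B * kron C D) $$ (i,j) = kron (A * C) (B * D) $$ (i,j)" .
next
  show "dim_row (kron A B * kron C D) = dim_row (kron (A * C) (B * D))" using assms by simp
next
  show "dim_col (kron A B * kron C D) = dim_col (kron (A * C) (B * D))" using assms by simp
qed

lemma kron_one: "n > 0 \<Longrightarrow> kron (1\<^sub>m m) (1\<^sub>m n) = (1\<^sub>m (m*n) :: complex mat)"
proof (rule eq_matI)
  fix i j assume n: "n > 0" and "i < dim_row (1\<^sub>m (m * n) :: complex mat)" "j < dim_col (1\<^sub>m (m * n) :: complex mat)"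
  then have ij: "i < m*n" "j < m*n" by auto
  have "(i div n = j div n \<and> i mod n = j mod n) = (i = j)"
    by (metis div_mult_mod_eq)
  then show "kron (1\<^sub>m m) (1\<^sub>m n) $$ (i,j) = (1\<^sub>m (m*n) :: complex mat) $$ (i,j)"
    using ij n by (auto simp: kron_index less_mult_imp_div_less)
qed auto

lemma kron_pow:
  assumes A: "A \<in> carrier_mat r r" and B: "B \<in> carrier_mat s s" and s: "s > 0"
  shows "kron A B ^\<^sub>m k = kron (A ^\<^sub>m k) (B ^\<^sub>m k)"
proof (induction k)
  case 0
  show ?case using assms by (simp add: kron_one)
next
  case (Suc k)
  have "kron A B ^\<^sub>m Suc k = kron (A ^\<^sub>m k) (B ^\<^sub>m k) * kron A B" using Suc by simp
  also have "\<dots> = kron (A ^\<^sub>m k * A) (B ^\<^sub>m k * B)"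
    by (rule kron_mult) (use A B in auto)
  finally show ?case by simp
qed

lemma adj_kron: "adj (kron A B) = kron (adj A) (adj B)"
proof (rule eq_matI)
  fix i j assume "i < dim_row (kron (adj A) (adj B))" "j < dim_col (kron (adj A) (adj B))"
  then have ij: "i < dim_col A * dim_col B" "j < dim_row A * dim_row B" by auto
  then have pos: "dim_col B > 0" "dim_row B > 0" by (auto intro: Nat.gr0I)
  show "adj (kron A B) $$ (i,j) = kron (adj A) (adj B) $$ (i,j)"
    using ij pos by (simp add: kron_index less_mult_imp_div_less)
qed auto

lemma sum4_prod:
  fixes f g :: "nat \<Rightarrow> nat \<Rightarrow> 'a::comm_semiring_1"
  shows "(\<Sum>i\<in>A. \<Sum>j\<in>B. f i j) * (\<Sum>k\<in>C. \<Sum>l\<in>D. g k l) = (\<Sum>i\<in>A. \<Sum>j\<in>B. \<Sum>k\<in>C. \<Sum>l\<in>D. f i j * g k l)"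
proof -
  have "(\<Sum>i\<in>A. \<Sum>j\<in>B. f i j) * (\<Sum>k\<in>C. \<Sum>l\<in>D. g k l) = (\<Sum>i\<in>A. (\<Sum>j\<in>B. f i j) * (\<Sum>k\<in>C. \<Sum>l\<in>D. g k l))"
    by (rule sum_distrib_right)
  also have "\<dots> = (\<Sum>i\<in>A. \<Sum>j\<in>B. f i j * (\<Sum>k\<in>C. \<Sum>l\<in>D. g k l))"
    by (rule sum.cong[OF refl], rule sum_distrib_right)
  also have "\<dots> = (\<Sum>i\<in>A. \<Sum>j\<in>B. \<Sum>k\<in>C. f i j * (\<Sum>l\<in>D. g k l))"
    by (rule sum.cong[OF refl], rule sum.cong[OF refl], rule sum_distrib_left)
  also have "\<dots> = (\<Sum>i\<in>A. \<Sum>j\<in>B. \<Sum>k\<in>C. \<Sum>l\<in>D. f i j * g k l)"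
    by (rule sum.cong[OF refl], rule sum.cong[OF refl], rule sum.cong[OF refl], rule sum_distrib_left)
  finally show ?thesis .
qed

lemma fro_kron: "fro (kron A B) = fro A * fro B"
proof -
  let ?ra = "dim_row A" and ?rb = "dim_row B" and ?ca = "dim_col A" and ?cb = "dim_col B"
  have "fro (kron A B) = (\<Sum>i<?ra. \<Sum>k<?rb. \<Sum>j<?ca. \<Sum>l<?cb. (cmod (kron A B $$ (i*?rb+k, j*?cb+l)))\<^sup>2)"
    unfolding fro_def by (simp only: kron_dim sum_prod_nat)
  also have "\<dots> = (\<Sum>i<?ra. \<Sum>k<?rb. \<Sum>j<?ca. \<Sum>l<?cb. (cmod (A $$ (i,j)))\<^sup>2 * (cmod (B $$ (k,l)))\<^sup>2)"
  proof (intro sum.cong refl)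
    fix i k j l assume "i \<in> {..<?ra}" "k \<in> {..<?rb}" "j \<in> {..<?ca}" "l \<in> {..<?cb}"
    then show "(cmod (kron A B $$ (i*?rb+k, j*?cb+l)))\<^sup>2 = (cmod (A $$ (i,j)))\<^sup>2 * (cmod (B $$ (k,l)))\<^sup>2"
      by (simp only: kron_index3 lessThan_iff norm_mult power_mult_distrib)
  qed
  also have "\<dots> = (\<Sum>i<?ra. \<Sum>j<?ca. \<Sum>k<?rb. \<Sum>l<?cb. (cmod (A $$ (i,j)))\<^sup>2 * (cmod (B $$ (k,l)))\<^sup>2)"
    by (rule sum.cong[OF refl], rule sum.swap)
  also have "\<dots> = fro A * fro B"
    unfolding fro_def by (rule sum4_prod[symmetric])
  finally show ?thesis .
qed

definition pt :: "complex mat \<Rightarrow> nat \<Rightarrow> nat \<Rightarrow> complex mat \<Rightarrow> complex mat" where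
  "pt A rb cb M = mat rb cb (\<lambda>(k,l). \<Sum>i<dim_row A. \<Sum>j<dim_col A. cnj (A $$ (i,j)) * M $$ (i*rb+k, j*cb+l))"

lemma pt_carrier: "pt A rb cb M \<in> carrier_mat rb cb"
  by (simp add: pt_def)

lemma hs_kron:
  assumes B: "B \<in> carrier_mat rb cb"
  shows "hs (kron A B) M = hs B (pt A rb cb M)"
proof -
  let ?ra = "dim_row A" and ?ca = "dim_col A"
  have rb: "dim_row B = rb" and cb: "dim_col B = cb" using B by auto
  have "hs (kron A B) M = (\<Sum>i<?ra. \<Sum>k<rb. \<Sum>j<?ca. \<Sum>l<cb. cnj (kron A B $$ (i*rb+k, j*cb+l)) * M $$ (i*rb+k, j*cb+l))"
    unfolding hs_def by (simp only: kron_dim rb cb sum_prod_nat)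
  also have "\<dots> = (\<Sum>i<?ra. \<Sum>k<rb. \<Sum>j<?ca. \<Sum>l<cb. cnj (B $$ (k,l)) * (cnj (A $$ (i,j)) * M $$ (i*rb+k, j*cb+l)))"
  proof (intro sum.cong refl)
    fix i k j l assume "i \<in> {..<?ra}" "k \<in> {..<rb}" "j \<in> {..<?ca}" "l \<in> {..<cb}"
    then have "kron A B $$ (i*rb+k, j*cb+l) = A $$ (i,j) * B $$ (k,l)"
      using kron_index3[of i A k B j l] rb cb by simp
    then show "cnj (kron A B $$ (i*rb+k, j*cb+l)) * M $$ (i*rb+k, j*cb+l) =
       cnj (B $$ (k,l)) * (cnj (A $$ (i,j)) * M $$ (i*rb+k, j*cb+l))"
      by (simp add: ac_simps)
  qed
  also have "\<dots> = (\<Sum>i<?ra. \<Sum>j<?ca. \<Sum>k<rb. \<Sum>l<cb. cnj (B $$ (k,l)) * (cnj (A $$ (i,j)) * M $$ (i*rb+k, j*cb+l)))"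
    by (rule sum.cong[OF refl], rule sum.swap)
  also have "\<dots> = (\<Sum>k<rb. \<Sum>l<cb. \<Sum>i<?ra. \<Sum>j<?ca. cnj (B $$ (k,l)) * (cnj (A $$ (i,j)) * M $$ (i*rb+k, j*cb+l)))"
  proof -
    have "(\<Sum>i<?ra. \<Sum>j<?ca. \<Sum>k<rb. \<Sum>l<cb. F i j k l) = (\<Sum>k<rb. \<Sum>l<cb. \<Sum>i<?ra. \<Sum>j<?ca. F i j k l)"
      for F :: "nat \<Rightarrow> nat \<Rightarrow> nat \<Rightarrow> nat \<Rightarrow> complex"
    proof -
      have "(\<Sum>i<?ra. \<Sum>j<?ca. \<Sum>k<rb. \<Sum>l<cb. F i j k l) = (\<Sum>i<?ra. \<Sum>k<rb. \<Sum>j<?ca. \<Sum>l<cb. F i j k l)"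
        by (rule sum.cong[OF refl], rule sum.swap)
      also have "\<dots> = (\<Sum>k<rb. \<Sum>i<?ra. \<Sum>j<?ca. \<Sum>l<cb. F i j k l)" by (rule sum.swap)
      also have "\<dots> = (\<Sum>k<rb. \<Sum>i<?ra. \<Sum>l<cb. \<Sum>j<?ca. F i j k l)"
        by (rule sum.cong[OF refl], rule sum.cong[OF refl], rule sum.swap)
      also have "\<dots> = (\<Sum>k<rb. \<Sum>l<cb. \<Sum>i<?ra. \<Sum>j<?ca. F i j k l)"
        by (rule sum.cong[OF refl], rule sum.swap)
      finally show ?thesis .
    qed
    then show ?thesis .
  qed
  also have "\<dots> = hs B (pt A rb cb M)"
    unfolding hs_def pt_def rb cb by (simp add: sum_distrib_left)
  finally show ?thesis .
qed

lemma omega_cis: "omega dL = cis (2*pi/dL)"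
  by (simp add: omega_def cis_conv_exp mult.commute)

lemma tau_cis: "tau dL = - cis (pi/dL)"
  by (simp add: tau_def cis_conv_exp mult.commute)

lemma omega_pow: "omega dL ^ k = cis (2*pi*real k/dL)"
proof -
  have "real k * (2*pi/dL) = 2*pi*real k/dL" by simp
  then show ?thesis by (simp only: omega_cis DeMoivre)
qed

lemma cmod_omega_pow[simp]: "cmod (omega dL ^ k) = 1"
  by (simp add: omega_pow)

lemma cmod_tau_pow[simp]: "cmod (tau dL ^ k) = 1"
  by (simp add: tau_cis norm_power)

lemma omega_pow_dL: "dL > 0 \<Longrightarrow> omega dL ^ dL = 1"
  by (simp add: omega_pow)

lemma omega_pow_mod: assumes "dL > 0" shows "omega dL ^ (k mod dL) = omega dL ^ k"
proof -
  have "omega dL ^ k = omega dL ^ (k div dL * dL + k mod dL)" by simp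
  also have "\<dots> = (omega dL ^ dL) ^ (k div dL) * omega dL ^ (k mod dL)"
    by (metis power_add power_mult mult.commute)
  also have "(omega dL ^ dL) ^ (k div dL) = 1" using omega_pow_dL[OF assms] by simp
  finally show ?thesis by simp
qed

lemma omega_pow_eq1: assumes "dL > 0" shows "omega dL ^ k = 1 \<longleftrightarrow> dL dvd k"
proof
  assume "dL dvd k"
  then obtain m where "k = dL * m" by blast
  then show "omega dL ^ k = 1" using omega_pow_dL[OF assms] by (simp add: power_mult)
next
  assume h: "omega dL ^ k = 1"
  have inj: "inj_on (\<lambda>k. cis (2 * pi * real k / real dL)) {..<dL}"
    using bij_betw_roots_unity[OF assms] by (simp add: bij_betw_def)
  have "cis (2 * pi * real (k mod dL) / real dL) = cis (2 * pi * real 0 / real dL)"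
    using h omega_pow_mod[OF assms, of k] by (simp add: omega_pow)
  then have "k mod dL = 0" using inj_onD[OF inj] assms by simp
  then show "dL dvd k" by auto
qed

lemma cnj_mult_self: "cnj z * z = complex_of_real ((cmod z)^2)"
  by (simp add: complex_norm_square mult.commute del: of_real_power)

lemma cnj_omega_mult[simp]: "cnj (omega dL ^ k) * omega dL ^ k = 1"
  by (simp only: cnj_mult_self cmod_omega_pow) simp

lemma char_orth:
  assumes "dL > 0" "j < dL" "k < dL"
  shows "(\<Sum>b<dL. cnj (omega dL ^ (b*j)) * omega dL ^ (b*k)) = (if j = k then of_nat dL else 0)"
proof -
  let ?z = "omega dL ^ (k + dL - j)"
  have e: "cnj (omega dL ^ (b*j)) * omega dL ^ (b*k) = ?z ^ b" for b
  proof -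
    have "omega dL ^ (b*k) = omega dL ^ (b*j) * ?z ^ b"
    proof -
      have "?z ^ b = omega dL ^ (b*(k + dL - j))" by (metis power_mult mult.commute)
      then have "omega dL ^ (b*j) * ?z ^ b = omega dL ^ (b*j + b*(k + dL - j))"
        by (simp only: power_add)
      also have "b*j + b*(k + dL - j) = b*k + dL * b"
      proof -
        have "b*j + b*(k + dL - j) = b*(j + (k + dL - j))" by (rule distrib_left[symmetric])
        also have "j + (k + dL - j) = k + dL" using assms by simp
        finally show ?thesis by (simp add: algebra_simps)
      qed
      also have "omega dL ^ (b*k + dL*b) = omega dL ^ (b*k) * (omega dL ^ dL) ^ b"
        by (simp only: power_add power_mult)
      also have "\<dots> = omega dL ^ (b*k)" using omega_pow_dL[OF assms(1)] by simp
      finally show ?thesis by simp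
    qed
    then have "cnj (omega dL ^ (b*j)) * omega dL ^ (b*k) = (cnj (omega dL ^ (b*j)) * omega dL ^ (b*j)) * ?z ^ b"
      by (simp only: mult.assoc)
    then show ?thesis by (simp only: cnj_omega_mult mult_1_left)
  qed
  have "?z ^ dL = (omega dL ^ dL) ^ (k + dL - j)" by (metis power_mult mult.commute)
  then have zd: "?z ^ dL = 1"
    using omega_pow_dL[OF assms(1)] by simp
  have z1: "?z = 1 \<longleftrightarrow> j = k"
  proof -
    have "dL dvd (k + dL - j) \<longleftrightarrow> j = k"
    proof
      assume "dL dvd (k + dL - j)"
      then obtain m where m: "k + dL - j = dL * m" by blast
      have "0 < k + dL - j" "k + dL - j < 2 * dL" using assms by auto
      then have "m = 1" using m
        by (metis less_one mult.commute mult_less_cancel2 mult_is_0 nat_neq_iff not_less_zero one_less_numeral_iff semiring_norm(76) less_2_cases_iff)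
      then show "j = k" using m assms by simp
    qed simp
    then show ?thesis using omega_pow_eq1[OF assms(1)] by simp
  qed
  have s: "(\<Sum>b<dL. cnj (omega dL ^ (b*j)) * omega dL ^ (b*k)) = (\<Sum>b<dL. ?z ^ b)"
    by (rule sum.cong[OF refl]) (rule e)
  show ?thesis
  proof (cases "j = k")
    case True
    then have "?z = 1" using omega_pow_dL[OF assms(1)] by simp
    then show ?thesis unfolding s using True by simp
  next
    case False
    then show ?thesis unfolding s using zd z1 by (simp add: sum_gp_strict)
  qed
qed


lemma powc: "A \<in> carrier_mat n n \<Longrightarrow> A ^\<^sub>m k \<in> carrier_mat n n"
  by (metis pow_mat_dim_square carrier_matI)

lemma sum_if_eq:
  fixes f :: "nat \<Rightarrow> 'a::semiring_0"
  assumes "c < n"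
  shows "(\<Sum>l<n. f l * (if l = c then g else 0)) = f c * g"
proof -
  have "(\<Sum>l<n. f l * (if l = c then g else 0)) = (\<Sum>l<n. if l = c then f l * g else 0)"
    by (rule sum.cong) auto
  also have "\<dots> = f c * g" using assms by (simp add: sum.delta)
  finally show ?thesis .
qed

lemma Xop_carrier[simp]: "Xop dL \<in> carrier_mat dL dL" by (simp add: Xop_def)
lemma Zop_carrier[simp]: "Zop dL \<in> carrier_mat dL dL" by (simp add: Zop_def)

lemma Xpow_entry:
  assumes "i < dL" "j < dL"
  shows "(Xop dL ^\<^sub>m a) $$ (i,j) = (if i = (j+a) mod dL then 1 else 0)"
  using assms
proof (induction a arbitrary: i j)
  case 0
  then show ?case by (simp add: Xop_def)
next
  case (Suc a)
  have c: "(j+1) mod dL < dL" using Suc.prems by simp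
  have "(Xop dL ^\<^sub>m Suc a) $$ (i,j) = (Xop dL ^\<^sub>m a * Xop dL) $$ (i,j)" by simp
  also have "\<dots> = (\<Sum>l<dL. (Xop dL ^\<^sub>m a) $$ (i,l) * Xop dL $$ (l,j))"
    by (rule mult_entry[OF powc[OF Xop_carrier] Xop_carrier Suc.prems])
  also have "\<dots> = (\<Sum>l<dL. (Xop dL ^\<^sub>m a) $$ (i,l) * (if l = (j+1) mod dL then 1 else 0))"
    by (rule sum.cong[OF refl]) (use Suc.prems in \<open>simp add: Xop_def\<close>)
  also have "\<dots> = (Xop dL ^\<^sub>m a) $$ (i, (j+1) mod dL) * 1" by (rule sum_if_eq[OF c])
  also have "\<dots> = (if i = ((j+1) mod dL + a) mod dL then 1 else 0)"
    using Suc.IH[OF Suc.prems(1) c] by simp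
  also have "((j+1) mod dL + a) mod dL = (j + Suc a) mod dL" by (simp add: mod_add_left_eq)
  finally show ?case .
qed

lemma Zpow_entry:
  assumes "i < dL" "j < dL"
  shows "(Zop dL ^\<^sub>m b) $$ (i,j) = (if i = j then omega dL ^ (b*j) else 0)"
  using assms
proof (induction b arbitrary: i j)
  case 0
  then show ?case by (simp add: Zop_def)
next
  case (Suc b)
  have "(Zop dL ^\<^sub>m Suc b) $$ (i,j) = (Zop dL ^\<^sub>m b * Zop dL) $$ (i,j)" by simp
  also have "\<dots> = (\<Sum>l<dL. (Zop dL ^\<^sub>m b) $$ (i,l) * Zop dL $$ (l,j))"
    by (rule mult_entry[OF powc[OF Zop_carrier] Zop_carrier Suc.prems])
  also have "\<dots> = (\<Sum>l<dL. (Zop dL ^\<^sub>m b) $$ (i,l) * (if l = j then omega dL ^ j else 0))"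
    by (rule sum.cong[OF refl]) (use Suc.prems in \<open>simp add: Zop_def\<close>)
  also have "\<dots> = (Zop dL ^\<^sub>m b) $$ (i, j) * omega dL ^ j" by (rule sum_if_eq[OF Suc.prems(2)])
  also have "\<dots> = (if i = j then omega dL ^ (b*j) * omega dL ^ j else 0)"
    using Suc.IH[OF Suc.prems] by simp
  also have "omega dL ^ (b*j) * omega dL ^ j = omega dL ^ (Suc b * j)"
    by (simp add: power_add)
  finally show ?case .
qed

lemma XZ_entry:
  assumes "i < dL" "j < dL"
  shows "(Xop dL ^\<^sub>m a * Zop dL ^\<^sub>m b) $$ (i,j) = (if i = (j+a) mod dL then omega dL ^ (b*j) else 0)"
proof -
  have "(Xop dL ^\<^sub>m a * Zop dL ^\<^sub>m b) $$ (i,j) = (\<Sum>l<dL. (Xop dL ^\<^sub>m a) $$ (i,l) * (Zop dL ^\<^sub>m b) $$ (l,j))"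
    by (rule mult_entry[OF powc[OF Xop_carrier] powc[OF Zop_carrier] assms])
  also have "\<dots> = (\<Sum>l<dL. (Xop dL ^\<^sub>m a) $$ (i,l) * (if l = j then omega dL ^ (b*j) else 0))"
    by (rule sum.cong[OF refl]) (use assms in \<open>simp add: Zpow_entry\<close>)
  also have "\<dots> = (Xop dL ^\<^sub>m a) $$ (i,j) * omega dL ^ (b*j)" by (rule sum_if_eq[OF assms(2)])
  also have "\<dots> = (if i = (j+a) mod dL then omega dL ^ (b*j) else 0)"
    using assms by (simp add: Xpow_entry)
  finally show ?thesis .
qed

lemma XZ_carrier: "Xop dL ^\<^sub>m a * Zop dL ^\<^sub>m b \<in> carrier_mat dL dL"
proof -
  have "Xop dL ^\<^sub>m a \<in> carrier_mat dL dL" "Zop dL ^\<^sub>m b \<in> carrier_mat dL dL"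
    by (rule powc, rule Xop_carrier) (rule powc, rule Zop_carrier)
  then show ?thesis by (rule mult_carrier_mat)
qed

lemma D1_carrier[simp]: "D1 dL p \<in> carrier_mat dL dL"
  unfolding D1_def by (rule smult_carrier_mat, rule XZ_carrier)

lemma D1_dim[simp]: "dim_row (D1 dL p) = dL" "dim_col (D1 dL p) = dL"
  by (rule carrier_matD[OF D1_carrier])+

lemma D1_entry:
  assumes "i < dL" "j < dL"
  shows "D1 dL (a,b) $$ (i,j) = tau dL ^ (a*b) * (if i = (j+a) mod dL then omega dL ^ (b*j) else 0)"
proof -
  have c: "Xop dL ^\<^sub>m a * Zop dL ^\<^sub>m b \<in> carrier_mat dL dL"
    by (rule XZ_carrier)
  have dims: "dim_row (Xop dL ^\<^sub>m a * Zop dL ^\<^sub>m b) = dL" "dim_col (Xop dL ^\<^sub>m a * Zop dL ^\<^sub>m b) = dL"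
    using c by auto
  have "D1 dL (a,b) $$ (i,j) = tau dL ^ (a*b) * (Xop dL ^\<^sub>m a * Zop dL ^\<^sub>m b) $$ (i,j)"
    unfolding D1_def fst_conv snd_conv by (rule index_smult_mat(1)) (use assms dims in auto)
  then show ?thesis using assms by (simp add: XZ_entry)
qed

lemma cmod_D1:
  assumes "i < dL" "j < dL"
  shows "(cmod (D1 dL (a,b) $$ (i,j)))^2 = (if i = (j+a) mod dL then 1 else 0)"
  using assms by (simp add: D1_entry norm_mult)

lemma fro_D1: assumes "dL > 0" shows "fro (D1 dL p) = real dL"
proof -
  obtain a b where p: "p = (a,b)" by (cases p)
  have "fro (D1 dL p) = (\<Sum>i<dL. \<Sum>j<dL. (if i = (j+a) mod dL then 1 else 0))"
    unfolding fro_def p D1_dim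
    by (intro sum.cong refl) (simp add: cmod_D1)
  also have "\<dots> = (\<Sum>j<dL. \<Sum>i<dL. (if i = (j+a) mod dL then 1 else 0))"
    by (rule sum.swap)
  also have "\<dots> = (\<Sum>j<dL. 1)"
    by (rule sum.cong[OF refl]) (use assms in \<open>simp add: sum.delta\<close>)
  finally show ?thesis by simp
qed

fun tri :: "nat \<Rightarrow> nat" where
  "tri 0 = 0"
| "tri (Suc m) = tri m + m"

lemma tri2: "2 * tri m + m = m * m"
  by (induction m) (simp_all add: algebra_simps)

lemma D1_pow_entry:
  assumes "dL > 0" "i < dL" "j < dL"
  shows "(D1 dL (a,b) ^\<^sub>m m) $$ (i,j) = (tau dL ^ (a*b)) ^ m *
     (if i = (j + m*a) mod dL then omega dL ^ (b*(m*j) + a*b*tri m) else 0)"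
  using assms(2,3)
proof (induction m arbitrary: i j)
  case 0
  then show ?case by simp
next
  case (Suc m)
  define c where "c = (j+a) mod dL"
  have c: "c < dL" unfolding c_def using assms by simp
  have "(D1 dL (a,b) ^\<^sub>m Suc m) $$ (i,j) = (D1 dL (a,b) ^\<^sub>m m * D1 dL (a,b)) $$ (i,j)" by simp
  also have "\<dots> = (\<Sum>l<dL. (D1 dL (a,b) ^\<^sub>m m) $$ (i,l) * D1 dL (a,b) $$ (l,j))"
    by (rule mult_entry[OF powc[OF D1_carrier] D1_carrier Suc.prems])
  also have "\<dots> = (\<Sum>l<dL. (D1 dL (a,b) ^\<^sub>m m) $$ (i,l) * (if l = c then tau dL ^ (a*b) * omega dL ^ (b*j) else 0))"
    by (rule sum.cong[OF refl]) (use Suc.prems in \<open>simp add: D1_entry c_def\<close>)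
  also have "\<dots> = (D1 dL (a,b) ^\<^sub>m m) $$ (i,c) * (tau dL ^ (a*b) * omega dL ^ (b*j))"
    by (rule sum_if_eq[OF c])
  also have "\<dots> = (tau dL ^ (a*b)) ^ m * (if i = (c + m*a) mod dL then omega dL ^ (b*(m*c) + a*b*tri m) else 0)
       * (tau dL ^ (a*b) * omega dL ^ (b*j))"
    using Suc.IH[OF Suc.prems(1) c] by simp
  finally have L: "(D1 dL (a,b) ^\<^sub>m Suc m) $$ (i,j) = (tau dL ^ (a*b)) ^ m *
     (if i = (c + m*a) mod dL then omega dL ^ (b*(m*c) + a*b*tri m) else 0) * (tau dL ^ (a*b) * omega dL ^ (b*j))" .
  have e1: "(c + m*a) mod dL = (j + Suc m * a) mod dL"
    unfolding c_def by (simp add: mod_add_left_eq add.assoc)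
  have e2: "omega dL ^ (b*(m*c) + a*b*tri m) = omega dL ^ (b*(m*(j+a)) + a*b*tri m)"
  proof -
    have "(b*(m*c)) mod dL = (b*(m*(j+a))) mod dL"
      unfolding c_def using mod_mult_right_eq[of "b*m" "j+a" dL] by (simp add: mult.assoc)
    then have "omega dL ^ (b*(m*c)) = omega dL ^ (b*(m*(j+a)))"
      using omega_pow_mod[OF assms(1), of "b*(m*c)"] omega_pow_mod[OF assms(1), of "b*(m*(j+a))"] by simp
    then show ?thesis by (simp only: power_add)
  qed
  have e3: "b*(m*(j+a)) + a*b*tri m + b*j = b*(Suc m * j) + a*b*tri (Suc m)"
    by (simp add: algebra_simps)
  have e4: "omega dL ^ (b*(m*c) + a*b*tri m) * omega dL ^ (b*j) = omega dL ^ (b*(Suc m * j) + a*b*tri (Suc m))"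
    by (simp only: e2 power_add[symmetric] e3)
  show ?case
  proof (cases "i = (j + Suc m * a) mod dL")
    case True
    then have "i = (c + m*a) mod dL" using e1 by simp
    then have "(D1 dL (a,b) ^\<^sub>m Suc m) $$ (i,j) = (tau dL ^ (a*b)) ^ m * omega dL ^ (b*(m*c) + a*b*tri m) * (tau dL ^ (a*b) * omega dL ^ (b*j))"
      using L by simp
    also have "\<dots> = ((tau dL ^ (a*b)) ^ m * tau dL ^ (a*b)) * (omega dL ^ (b*(m*c) + a*b*tri m) * omega dL ^ (b*j))"
      by (simp only: ac_simps)
    also have "\<dots> = (tau dL ^ (a*b)) ^ Suc m * omega dL ^ (b*(Suc m * j) + a*b*tri (Suc m))"
      by (simp only: e4 power_Suc2)
    finally show ?thesis using True by simp
  next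
    case False
    then have "i \<noteq> (c + m*a) mod dL" using e1 by simp
    then show ?thesis using L False by simp
  qed
qed

lemma tau_omega_key: assumes "dL > 0" shows "tau dL ^ dL * omega dL ^ tri dL = 1"
proof -
  obtain e where e: "dL = Suc e" using assms by (cases dL) auto
  have t: "2 * real (tri dL) = real dL * real dL - real dL"
    using arg_cong[OF tri2[of dL], of real] by simp
  have eq: "2*pi*real (tri dL)/real dL = real e * pi"
  proof -
    have "2*pi*real (tri dL)/real dL = pi * (2 * real (tri dL)) / real dL" by simp
    also have "\<dots> = pi * (real dL - 1)" unfolding t using assms
      by (simp add: field_simps)
    finally show ?thesis using e by simp
  qed
  have "omega dL ^ tri dL = cis (real e * pi)" using eq by (simp only: omega_pow)
  also have "\<dots> = cis pi ^ e" by (rule DeMoivre[symmetric])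
  finally have o: "omega dL ^ tri dL = (-1) ^ e" by simp
  have "tau dL ^ dL = (-1) ^ dL * cis (pi/dL) ^ dL"
    unfolding tau_cis by (rule power_minus)
  also have "cis (pi/dL) ^ dL = cis (real dL * (pi/dL))" by (rule DeMoivre)
  also have "real dL * (pi/dL) = pi" using assms by simp
  finally have "tau dL ^ dL = (-1) ^ Suc e * (-1)" using e by simp
  then show ?thesis using o by simp
qed

lemma D1_pow_dL: assumes "dL > 0" shows "D1 dL p ^\<^sub>m dL = 1\<^sub>m dL"
proof (rule eq_matI)
  obtain a b where p: "p = (a,b)" by (cases p)
  fix i j assume "i < dim_row (1\<^sub>m dL :: complex mat)" "j < dim_col (1\<^sub>m dL :: complex mat)"
  then have ij: "i < dL" "j < dL" by auto
  have m: "(j + dL*a) mod dL = j" using ij by simp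
  have "(D1 dL p ^\<^sub>m dL) $$ (i,j) = (tau dL ^ (a*b)) ^ dL *
     (if i = j then omega dL ^ (b*(dL*j) + a*b*tri dL) else 0)"
    unfolding p using D1_pow_entry[OF assms ij, of a b dL] m by simp
  also have "omega dL ^ (b*(dL*j) + a*b*tri dL) = (omega dL ^ dL) ^ (b*j) * (omega dL ^ tri dL) ^ (a*b)"
    by (simp add: power_add power_mult[symmetric] ac_simps)
  also have "(tau dL ^ (a*b)) ^ dL = (tau dL ^ dL) ^ (a*b)"
    by (simp add: power_mult[symmetric] ac_simps)
  finally have "(D1 dL p ^\<^sub>m dL) $$ (i,j) = (if i = j then (tau dL ^ dL * omega dL ^ tri dL) ^ (a*b) else 0)"
    using omega_pow_dL[OF assms] by (simp add: power_mult_distrib)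
  then show "(D1 dL p ^\<^sub>m dL) $$ (i,j) = (1\<^sub>m dL :: complex mat) $$ (i,j)"
    using tau_omega_key[OF assms] ij by simp
qed auto

lemma cnj_omega_mult'[simp]: "cnj (omega dL) ^ k * omega dL ^ k = 1"
  using cnj_omega_mult[of dL k] by simp

lemma cmod_tau1[simp]: "cmod (tau dL) = 1"
  by (simp add: tau_cis)

lemma cmod_cnj_tau_pow[simp]: "cmod (cnj (tau dL) ^ k) = 1"
  by (simp add: norm_power)

lemma dft_parseval:
  assumes "dL > 0"
  shows "(\<Sum>b<dL. (cmod (\<Sum>j<dL. cnj (omega dL ^ (b*j)) * y j))^2) = dL * (\<Sum>j<dL. (cmod (y j))^2)"
proof -
  define S where "S b = (\<Sum>j<dL. cnj (omega dL ^ (b*j)) * y j)" for b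
  have "complex_of_real (\<Sum>b<dL. (cmod (S b))^2) = (\<Sum>b<dL. cnj (S b) * S b)"
    by (simp add: cnj_mult_self)
  also have "\<dots> = (\<Sum>b<dL. \<Sum>j<dL. \<Sum>k<dL. (cnj (y j) * y k) * (cnj (omega dL ^ (b*k)) * omega dL ^ (b*j)))"
  proof (rule sum.cong[OF refl])
    fix b
    have "cnj (S b) = (\<Sum>j<dL. omega dL ^ (b*j) * cnj (y j))"
      unfolding S_def cnj_sum by (rule sum.cong[OF refl]) simp
    then have "cnj (S b) * S b = (\<Sum>j<dL. \<Sum>k<dL. (omega dL ^ (b*j) * cnj (y j)) * (cnj (omega dL ^ (b*k)) * y k))"
      unfolding S_def by (simp only: sum_product)
    also have "\<dots> = (\<Sum>j<dL. \<Sum>k<dL. (cnj (y j) * y k) * (cnj (omega dL ^ (b*k)) * omega dL ^ (b*j)))"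
      by (rule sum.cong[OF refl], rule sum.cong[OF refl]) (simp only: ac_simps)
    finally show "cnj (S b) * S b = \<dots>" .
  qed
  also have "\<dots> = (\<Sum>j<dL. \<Sum>k<dL. \<Sum>b<dL. (cnj (y j) * y k) * (cnj (omega dL ^ (b*k)) * omega dL ^ (b*j)))"
  proof -
    have "(\<Sum>b<dL. \<Sum>j<dL. \<Sum>k<dL. F b j k) = (\<Sum>j<dL. \<Sum>k<dL. \<Sum>b<dL. F b j k)" for F :: "nat \<Rightarrow> nat \<Rightarrow> nat \<Rightarrow> complex"
    proof -
      have "(\<Sum>b<dL. \<Sum>j<dL. \<Sum>k<dL. F b j k) = (\<Sum>j<dL. \<Sum>b<dL. \<Sum>k<dL. F b j k)" by (rule sum.swap)
      also have "\<dots> = (\<Sum>j<dL. \<Sum>k<dL. \<Sum>b<dL. F b j k)" by (rule sum.cong[OF refl], rule sum.swap)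
      finally show ?thesis .
    qed
    then show ?thesis .
  qed
  also have "\<dots> = (\<Sum>j<dL. \<Sum>k<dL. (cnj (y j) * y k) * (if k = j then of_nat dL else 0))"
  proof (rule sum.cong[OF refl], rule sum.cong[OF refl])
    fix j k assume jk: "j \<in> {..<dL}" "k \<in> {..<dL}"
    have "(\<Sum>b<dL. (cnj (y j) * y k) * (cnj (omega dL ^ (b*k)) * omega dL ^ (b*j))) =
      (cnj (y j) * y k) * (\<Sum>b<dL. cnj (omega dL ^ (b*k)) * omega dL ^ (b*j))"
      by (rule sum_distrib_left[symmetric])
    also have "(\<Sum>b<dL. cnj (omega dL ^ (b*k)) * omega dL ^ (b*j)) = (if k = j then of_nat dL else 0)"
      using jk by (intro char_orth assms) auto
    finally show "(\<Sum>b<dL. (cnj (y j) * y k) * (cnj (omega dL ^ (b*k)) * omega dL ^ (b*j))) =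
      (cnj (y j) * y k) * (if k = j then of_nat dL else 0)" .
  qed
  also have "\<dots> = (\<Sum>j<dL. (cnj (y j) * y j) * of_nat dL)"
    by (rule sum.cong[OF refl]) (simp add: sum_if_eq)
  also have "\<dots> = (\<Sum>j<dL. complex_of_real ((cmod (y j))^2 * real dL))"
    by (simp only: cnj_mult_self of_real_mult of_real_of_nat_eq)
  also have "\<dots> = complex_of_real (\<Sum>j<dL. (cmod (y j))^2 * real dL)"
    by (rule of_real_sum[symmetric])
  also have "(\<Sum>j<dL. (cmod (y j))^2 * real dL) = dL * (\<Sum>j<dL. (cmod (y j))^2)"
    by (simp add: sum_distrib_left mult.commute)
  finally show ?thesis unfolding S_def of_real_eq_iff .
qed

lemma shift1:
  fixes g :: "nat \<Rightarrow> 'a::comm_monoid_add"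
  shows "(\<Sum>a<d. g ((a+1) mod d)) = (\<Sum>a<d. g a)"
proof (cases d)
  case 0
  then show ?thesis by simp
next
  case (Suc e)
  have "(\<Sum>a<Suc e. g ((a+1) mod Suc e)) = (\<Sum>a<e. g ((a+1) mod Suc e)) + g ((e+1) mod Suc e)"
    by (rule sum.lessThan_Suc)
  also have "(\<Sum>a<e. g ((a+1) mod Suc e)) = (\<Sum>a<e. g (Suc a))"
    by (rule sum.cong[OF refl]) simp
  also have "g ((e+1) mod Suc e) = g 0" by simp
  also have "(\<Sum>a<e. g (Suc a)) + g 0 = (\<Sum>a<Suc e. g a)"
    by (subst sum.lessThan_Suc_shift) (rule add.commute)
  finally show ?thesis using Suc by simp
qed

lemma shiftj:
  fixes f :: "nat \<Rightarrow> 'a::comm_monoid_add"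
  shows "(\<Sum>a<d. f ((j+a) mod d)) = (\<Sum>i<d. f i)"
proof (induction j)
  case 0
  then show ?case by (intro sum.cong refl) simp
next
  case (Suc j)
  have "(\<Sum>a<d. f ((Suc j + a) mod d)) = (\<Sum>a<d. (\<lambda>x. f ((j + x) mod d)) ((a+1) mod d))"
    by (rule sum.cong[OF refl]) (simp add: mod_add_right_eq)
  also have "\<dots> = (\<Sum>a<d. f ((j+a) mod d))" by (rule shift1)
  finally show ?case using Suc by simp
qed

lemma D1_inner:
  assumes "dL > 0"
  shows "(\<Sum>i<dL. \<Sum>j<dL. cnj (D1 dL (a,b) $$ (i,j)) * x i j) =
    cnj (tau dL ^ (a*b)) * (\<Sum>j<dL. cnj (omega dL ^ (b*j)) * x ((j+a) mod dL) j)"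
proof -
  have "(\<Sum>i<dL. \<Sum>j<dL. cnj (D1 dL (a,b) $$ (i,j)) * x i j) = (\<Sum>j<dL. \<Sum>i<dL. cnj (D1 dL (a,b) $$ (i,j)) * x i j)"
    by (rule sum.swap)
  also have "\<dots> = (\<Sum>j<dL. cnj (tau dL ^ (a*b)) * (cnj (omega dL ^ (b*j)) * x ((j+a) mod dL) j))"
  proof (rule sum.cong[OF refl])
    fix j assume j: "j \<in> {..<dL}"
    have "(\<Sum>i<dL. cnj (D1 dL (a,b) $$ (i,j)) * x i j) =
       (\<Sum>i<dL. if i = (j+a) mod dL then cnj (tau dL ^ (a*b)) * (cnj (omega dL ^ (b*j)) * x i j) else 0)"
      by (rule sum.cong[OF refl]) (use j in \<open>simp add: D1_entry\<close>)
    also have "\<dots> = cnj (tau dL ^ (a*b)) * (cnj (omega dL ^ (b*j)) * x ((j+a) mod dL) j)"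
      using assms by (simp add: sum.delta)
    finally show "(\<Sum>i<dL. cnj (D1 dL (a,b) $$ (i,j)) * x i j) = \<dots>" .
  qed
  also have "\<dots> = cnj (tau dL ^ (a*b)) * (\<Sum>j<dL. cnj (omega dL ^ (b*j)) * x ((j+a) mod dL) j)"
    by (simp add: sum_distrib_left)
  finally show ?thesis .
qed

lemma sqp:
  assumes "dL > 0"
  shows "(\<Sum>p\<in>{..<dL}\<times>{..<dL}. (cmod (\<Sum>i<dL. \<Sum>j<dL. cnj (D1 dL p $$ (i,j)) * x i j))^2)
    = dL * (\<Sum>i<dL. \<Sum>j<dL. (cmod (x i j))^2)"
proof -
  have "(\<Sum>p\<in>{..<dL}\<times>{..<dL}. (cmod (\<Sum>i<dL. \<Sum>j<dL. cnj (D1 dL p $$ (i,j)) * x i j))^2)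
     = (\<Sum>a<dL. \<Sum>b<dL. (cmod (\<Sum>i<dL. \<Sum>j<dL. cnj (D1 dL (a,b) $$ (i,j)) * x i j))^2)"
    by (simp add: sum.cartesian_product case_prod_unfold)
  also have "\<dots> = (\<Sum>a<dL. \<Sum>b<dL. (cmod (\<Sum>j<dL. cnj (omega dL ^ (b*j)) * x ((j+a) mod dL) j))^2)"
    by (rule sum.cong[OF refl], rule sum.cong[OF refl]) (simp add: D1_inner[OF assms] norm_mult)
  also have "\<dots> = (\<Sum>a<dL. dL * (\<Sum>j<dL. (cmod (x ((j+a) mod dL) j))^2))"
    by (rule sum.cong[OF refl]) (rule dft_parseval[OF assms])
  also have "\<dots> = dL * (\<Sum>a<dL. \<Sum>j<dL. (cmod (x ((j+a) mod dL) j))^2)"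
    by (rule sum_distrib_left[symmetric])
  also have "(\<Sum>a<dL. \<Sum>j<dL. (cmod (x ((j+a) mod dL) j))^2) = (\<Sum>j<dL. \<Sum>a<dL. (cmod (x ((j+a) mod dL) j))^2)"
    by (rule sum.swap)
  also have "\<dots> = (\<Sum>j<dL. \<Sum>i<dL. (cmod (x i j))^2)"
    by (rule sum.cong[OF refl]) (rule shiftj)
  also have "\<dots> = (\<Sum>i<dL. \<Sum>j<dL. (cmod (x i j))^2)"
    by (rule sum.swap)
  finally show ?thesis .
qed

lemma Dop_Nil[simp]: "Dop dL [] = 1\<^sub>m 1" by (simp add: Dop_def)
lemma Dop_Cons[simp]: "Dop dL (p#a) = kron (D1 dL p) (Dop dL a)" by (simp add: Dop_def)

lemma Dop_carrier: "Dop dL a \<in> carrier_mat (dL ^ length a) (dL ^ length a)"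
proof (induction a)
  case Nil
  then show ?case by simp
next
  case (Cons p a)
  have "kron (D1 dL p) (Dop dL a) \<in> carrier_mat (dL * dL ^ length a) (dL * dL ^ length a)"
    by (rule kron_carrier[OF D1_carrier Cons.IH])
  then show ?case by simp
qed

lemma Dop_dim[simp]: "dim_row (Dop dL a) = dL ^ length a" "dim_col (Dop dL a) = dL ^ length a"
  by (rule carrier_matD[OF Dop_carrier])+

lemma fro_one1: "fro (1\<^sub>m 1) = 1" "fro (1\<^sub>m (Suc 0)) = 1"
  by (simp_all add: fro_def)

lemma fro_Dop: assumes "dL > 0" shows "fro (Dop dL a) = real dL ^ length a"
proof (induction a)
  case Nil
  then show ?case by (simp add: fro_one1)
next
  case (Cons p a)
  then show ?case by (simp add: fro_kron fro_D1[OF assms])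
qed

lemma one_pow: "(1\<^sub>m n :: complex mat) ^\<^sub>m k = 1\<^sub>m n"
  by (induction k) simp_all

lemma Dop_pow: assumes "dL > 0" shows "Dop dL a ^\<^sub>m dL = 1\<^sub>m (dL ^ length a)"
proof (induction a)
  case Nil
  then show ?case by (simp add: one_pow)
next
  case (Cons p a)
  have "Dop dL (p#a) ^\<^sub>m dL = kron (D1 dL p ^\<^sub>m dL) (Dop dL a ^\<^sub>m dL)"
    unfolding Dop_Cons by (rule kron_pow[OF D1_carrier Dop_carrier]) (use assms in simp)
  also have "\<dots> = kron (1\<^sub>m dL) (1\<^sub>m (dL ^ length a))"
    by (simp only: D1_pow_dL[OF assms] Cons.IH)
  also have "\<dots> = 1\<^sub>m (dL * dL ^ length a)"
    by (rule kron_one) (use assms in simp)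
  finally show ?case by simp
qed

lemma pts_0: "pts dL 0 = {[]}" by (auto simp: pts_def)

lemma pts_length: "a \<in> pts dL n \<Longrightarrow> length a = n" by (simp add: pts_def)

lemma pts_Suc: "pts dL (Suc n) = (\<lambda>(p,a). p#a) ` (({..<dL}\<times>{..<dL}) \<times> pts dL n)"
proof (intro equalityI subsetI)
    fix x
    assume x: "x \<in> pts dL (Suc n)"
    then obtain p a where xa: "x = p#a" unfolding pts_def by (cases x) auto
    then have "p \<in> {..<dL}\<times>{..<dL}" "a \<in> pts dL n" using x unfolding pts_def by (auto simp: mem_Times_iff)
    then show "x \<in> (\<lambda>(p,a). p#a) ` (({..<dL}\<times>{..<dL}) \<times> pts dL n)"
      using xa by (intro image_eqI[of _ _ "(p,a)"]) auto
  next
    fix x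
    assume "x \<in> (\<lambda>(p,a). p#a) ` (({..<dL}\<times>{..<dL}) \<times> pts dL n)"
    then obtain p a where "x = p#a" "p \<in> {..<dL}\<times>{..<dL}" "a \<in> pts dL n" by auto
    then show "x \<in> pts dL (Suc n)" unfolding pts_def by (auto simp: mem_Times_iff)
qed

lemma inj_cons: "inj_on (\<lambda>(p,a). p#a) X"
  by (auto simp: inj_on_def)

lemma finite_pts: "finite (pts dL n)"
  by (induction n) (simp_all add: pts_0 pts_Suc)

lemma card_pts: "card (pts dL n) = dL ^ (2*n)"
proof (induction n)
  case 0
  then show ?case by (simp add: pts_0)
next
  case (Suc n)
  have "card (pts dL (Suc n)) = card (({..<dL}\<times>{..<dL}) \<times> pts dL n)"
    unfolding pts_Suc by (rule card_image[OF inj_cons])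
  also have "\<dots> = dL * dL * dL ^ (2*n)" by (simp add: card_cartesian_product Suc.IH)
  finally show ?case by (simp add: power_add power_mult_distrib mult_2 algebra_simps)
qed

lemma sum_pts_Suc:
  "(\<Sum>a\<in>pts dL (Suc n). f a) = (\<Sum>p\<in>{..<dL}\<times>{..<dL}. \<Sum>a\<in>pts dL n. f (p#a))"
proof -
  have "(\<Sum>a\<in>pts dL (Suc n). f a) = (\<Sum>x\<in>({..<dL}\<times>{..<dL}) \<times> pts dL n. f ((\<lambda>(p,a). p#a) x))"
    unfolding pts_Suc by (rule sum.reindex[OF inj_cons, unfolded comp_def])
  also have "\<dots> = (\<Sum>p\<in>{..<dL}\<times>{..<dL}. \<Sum>a\<in>pts dL n. f (p#a))"
    by (simp add: sum.cartesian_product case_prod_unfold)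
  finally show ?thesis .
qed

lemma swap4:
  "(\<Sum>i\<in>A. \<Sum>k\<in>B. \<Sum>j\<in>C. \<Sum>l\<in>D. F i k j l) = (\<Sum>k\<in>B. \<Sum>l\<in>D. \<Sum>i\<in>A. \<Sum>j\<in>C. F i k j l)"
proof -
  have "(\<Sum>i\<in>A. \<Sum>k\<in>B. \<Sum>j\<in>C. \<Sum>l\<in>D. F i k j l) = (\<Sum>k\<in>B. \<Sum>i\<in>A. \<Sum>j\<in>C. \<Sum>l\<in>D. F i k j l)"
    by (rule sum.swap)
  also have "\<dots> = (\<Sum>k\<in>B. \<Sum>i\<in>A. \<Sum>l\<in>D. \<Sum>j\<in>C. F i k j l)"
    by (rule sum.cong[OF refl], rule sum.cong[OF refl], rule sum.swap)
  also have "\<dots> = (\<Sum>k\<in>B. \<Sum>l\<in>D. \<Sum>i\<in>A. \<Sum>j\<in>C. F i k j l)"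
    by (rule sum.cong[OF refl], rule sum.swap)
  finally show ?thesis .
qed

lemma swap3:
  "(\<Sum>p\<in>A. \<Sum>k\<in>B. \<Sum>l\<in>C. F p k l) = (\<Sum>k\<in>B. \<Sum>l\<in>C. \<Sum>p\<in>A. F p k l)"
proof -
  have "(\<Sum>p\<in>A. \<Sum>k\<in>B. \<Sum>l\<in>C. F p k l) = (\<Sum>k\<in>B. \<Sum>p\<in>A. \<Sum>l\<in>C. F p k l)"
    by (rule sum.swap)
  also have "\<dots> = (\<Sum>k\<in>B. \<Sum>l\<in>C. \<Sum>p\<in>A. F p k l)"
    by (rule sum.cong[OF refl], rule sum.swap)
  finally show ?thesis .
qed

lemma parseval:
  assumes "dL > 0" "M \<in> carrier_mat (dL^n) (dL^n)"
  shows "(\<Sum>a\<in>pts dL n. (cmod (hs (Dop dL a) M))^2) = real dL ^ n * fro M"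
  using assms(2)
proof (induction n arbitrary: M)
  case 0
  then have M: "dim_row M = 1" "dim_col M = 1" by auto
  show ?case by (simp add: pts_0 hs_def fro_def M)
next
  case (Suc n)
  define d' where "d' = dL ^ n"
  have M: "M \<in> carrier_mat (dL * d') (dL * d')" using Suc.prems unfolding d'_def by simp
  define N where "N p = pt (D1 dL p) d' d' M" for p
  have "(\<Sum>a\<in>pts dL (Suc n). (cmod (hs (Dop dL a) M))^2) =
     (\<Sum>p\<in>{..<dL}\<times>{..<dL}. \<Sum>a\<in>pts dL n. (cmod (hs (kron (D1 dL p) (Dop dL a)) M))^2)"
    by (simp add: sum_pts_Suc)
  also have "\<dots> = (\<Sum>p\<in>{..<dL}\<times>{..<dL}. \<Sum>a\<in>pts dL n. (cmod (hs (Dop dL a) (N p)))^2)"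
  proof (rule sum.cong[OF refl], rule sum.cong[OF refl])
    fix p a assume "a \<in> pts dL n"
    then have "Dop dL a \<in> carrier_mat d' d'" using Dop_carrier[of dL a] pts_length unfolding d'_def by metis
    then show "(cmod (hs (kron (D1 dL p) (Dop dL a)) M))^2 = (cmod (hs (Dop dL a) (N p)))^2"
      unfolding N_def by (simp only: hs_kron)
  qed
  also have "\<dots> = (\<Sum>p\<in>{..<dL}\<times>{..<dL}. real d' * fro (N p))"
  proof (rule sum.cong[OF refl])
    fix p
    have "N p \<in> carrier_mat (dL^n) (dL^n)" unfolding N_def d'_def by (rule pt_carrier)
    then show "(\<Sum>a\<in>pts dL n. (cmod (hs (Dop dL a) (N p)))^2) = real d' * fro (N p)"
      using Suc.IH unfolding d'_def by simp
  qed
  also have "\<dots> = real d' * (\<Sum>p\<in>{..<dL}\<times>{..<dL}. \<Sum>k<d'. \<Sum>l<d'.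
       (cmod (\<Sum>i<dL. \<Sum>j<dL. cnj (D1 dL p $$ (i,j)) * M $$ (i*d'+k, j*d'+l)))^2)"
    unfolding sum_distrib_left[symmetric]
    by (rule arg_cong[where f="\<lambda>x. real d' * x"], rule sum.cong[OF refl])
       (simp add: N_def fro_def pt_def)
  also have "(\<Sum>p\<in>{..<dL}\<times>{..<dL}. \<Sum>k<d'. \<Sum>l<d'.
       (cmod (\<Sum>i<dL. \<Sum>j<dL. cnj (D1 dL p $$ (i,j)) * M $$ (i*d'+k, j*d'+l)))^2)
     = (\<Sum>k<d'. \<Sum>l<d'. \<Sum>p\<in>{..<dL}\<times>{..<dL}.
       (cmod (\<Sum>i<dL. \<Sum>j<dL. cnj (D1 dL p $$ (i,j)) * M $$ (i*d'+k, j*d'+l)))^2)"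
    by (rule swap3)
  also have "\<dots> = (\<Sum>k<d'. \<Sum>l<d'. dL * (\<Sum>i<dL. \<Sum>j<dL. (cmod (M $$ (i*d'+k, j*d'+l)))^2))"
    by (rule sum.cong[OF refl], rule sum.cong[OF refl], rule sqp[OF assms(1)])
  also have "\<dots> = dL * (\<Sum>k<d'. \<Sum>l<d'. \<Sum>i<dL. \<Sum>j<dL. (cmod (M $$ (i*d'+k, j*d'+l)))^2)"
    by (simp add: sum_distrib_left)
  also have "(\<Sum>k<d'. \<Sum>l<d'. \<Sum>i<dL. \<Sum>j<dL. (cmod (M $$ (i*d'+k, j*d'+l)))^2) = fro M"
  proof -
    have "fro M = (\<Sum>i<dL. \<Sum>k<d'. \<Sum>j<dL. \<Sum>l<d'. (cmod (M $$ (i*d'+k, j*d'+l)))^2)"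
      unfolding fro_def using M by (simp add: sum_prod_nat)
    also have "\<dots> = (\<Sum>k<d'. \<Sum>l<d'. \<Sum>i<dL. \<Sum>j<dL. (cmod (M $$ (i*d'+k, j*d'+l)))^2)"
      by (rule swap4)
    finally show ?thesis by simp
  qed
  finally show ?case unfolding d'_def by simp
qed

lemma orth:
  assumes "dL > 0" "a \<in> pts dL n" "b \<in> pts dL n"
  shows "hs (Dop dL a) (Dop dL b) = (if a = b then of_nat (dL^n) else 0)"
proof -
  have lb: "length b = n" using assms(3) by (rule pts_length)
  have self: "hs (Dop dL b) (Dop dL b) = of_nat (dL^n)"
    by (simp add: hs_self fro_Dop[OF assms(1)] lb)
  show ?thesis
  proof (cases "a = b")
    case True
    then show ?thesis using self by simp
  next
    case False
    have P: "(\<Sum>c\<in>pts dL n. (cmod (hs (Dop dL c) (Dop dL b)))^2) = real dL ^ n * real dL ^ n"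
      using parseval[OF assms(1), of "Dop dL b" n] Dop_carrier[of dL b] lb
      by (simp add: fro_Dop[OF assms(1)])
    have "(\<Sum>c\<in>pts dL n. (cmod (hs (Dop dL c) (Dop dL b)))^2) =
      (cmod (hs (Dop dL b) (Dop dL b)))^2 + (\<Sum>c\<in>pts dL n - {b}. (cmod (hs (Dop dL c) (Dop dL b)))^2)"
      by (rule sum.remove[OF finite_pts assms(3)])
    also have "(cmod (hs (Dop dL b) (Dop dL b)))^2 = real dL ^ n * real dL ^ n"
      using self by (simp add: power2_eq_square norm_power)
    finally have "(\<Sum>c\<in>pts dL n - {b}. (cmod (hs (Dop dL c) (Dop dL b)))^2) = 0" using P by simp
    then have "(cmod (hs (Dop dL a) (Dop dL b)))^2 = 0"
      using assms(2) False by (subst (asm) sum_nonneg_eq_0_iff) (auto simp: finite_pts)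
    then show ?thesis using False by simp
  qed
qed

lemma smult_smult_mat: "(a::complex) \<cdot>\<^sub>m (b \<cdot>\<^sub>m A) = (a * b) \<cdot>\<^sub>m A"
  by (rule eq_matI) auto

lemma smult_pow:
  assumes "A \<in> carrier_mat d d"
  shows "((c::complex) \<cdot>\<^sub>m A) ^\<^sub>m k = c ^ k \<cdot>\<^sub>m (A ^\<^sub>m k)"
proof (induction k)
  case 0
  then show ?case using assms by (auto intro!: eq_matI)
next
  case (Suc k)
  have Ak: "A ^\<^sub>m k \<in> carrier_mat d d" using assms by (rule powc)
  have "(c \<cdot>\<^sub>m A) ^\<^sub>m Suc k = (c ^ k \<cdot>\<^sub>m (A ^\<^sub>m k)) * (c \<cdot>\<^sub>m A)" using Suc by simp
  also have "\<dots> = c ^ k \<cdot>\<^sub>m ((A ^\<^sub>m k) * (c \<cdot>\<^sub>m A))"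
    by (rule mult_smult_assoc_mat[OF Ak smult_carrier_mat[OF assms]])
  also have "(A ^\<^sub>m k) * (c \<cdot>\<^sub>m A) = c \<cdot>\<^sub>m ((A ^\<^sub>m k) * A)"
    by (rule mult_smult_distrib[OF Ak assms])
  also have "c ^ k \<cdot>\<^sub>m (c \<cdot>\<^sub>m ((A ^\<^sub>m k) * A)) = (c ^ k * c) \<cdot>\<^sub>m ((A ^\<^sub>m k) * A)"
    by (rule smult_smult_mat)
  finally show ?case by (simp only: power_Suc2 pow_mat.simps)
qed

lemma conj_mult:
  assumes U: "U \<in> carrier_mat d d" and vu: "adj U * U = 1\<^sub>m d"
    and A: "A \<in> carrier_mat d d" and B: "B \<in> carrier_mat d d"
  shows "(U * A * adj U) * (U * B * adj U) = U * (A * B) * adj U"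
proof -
  have V: "adj U \<in> carrier_mat d d" using U by (rule adj_carrier)
  have UA: "U * A \<in> carrier_mat d d" using U A by (rule mult_carrier_mat)
  have UB: "U * B \<in> carrier_mat d d" using U B by (rule mult_carrier_mat)
  have UBV: "U * B * adj U \<in> carrier_mat d d" using UB V by (rule mult_carrier_mat)
  have "(U * A * adj U) * (U * B * adj U) = (U * A) * (adj U * (U * B * adj U))"
    by (rule assoc_mult_mat[OF UA V UBV])
  also have "adj U * (U * B * adj U) = (adj U * (U * B)) * adj U"
    by (rule assoc_mult_mat[OF V UB V, symmetric])
  also have "adj U * (U * B) = (adj U * U) * B"
    by (rule assoc_mult_mat[OF V U B, symmetric])
  also have "(adj U * U) * B = B" using vu B by simp
  also have "(U * A) * (B * adj U) = ((U * A) * B) * adj U"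
    by (rule assoc_mult_mat[OF UA B V, symmetric])
  also have "(U * A) * B = U * (A * B)"
    by (rule assoc_mult_mat[OF U A B])
  finally show ?thesis .
qed

lemma conj_pow:
  assumes U: "U \<in> carrier_mat d d" and vu: "adj U * U = 1\<^sub>m d" and uv: "U * adj U = 1\<^sub>m d"
    and A: "A \<in> carrier_mat d d"
  shows "(U * A * adj U) ^\<^sub>m k = U * (A ^\<^sub>m k) * adj U"
proof (induction k)
  case 0
  have "U * A * adj U \<in> carrier_mat d d"
    using U A adj_carrier[OF U] by (intro mult_carrier_mat) 
  have "dim_row U = d" using U by auto
  then have "(U * A * adj U) ^\<^sub>m 0 = 1\<^sub>m d" by simp
  also have "\<dots> = U * (A ^\<^sub>m 0) * adj U" using uv U A by simp
  finally show ?case .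
next
  case (Suc k)
  have "(U * A * adj U) ^\<^sub>m Suc k = (U * (A ^\<^sub>m k) * adj U) * (U * A * adj U)" using Suc by simp
  also have "\<dots> = U * (A ^\<^sub>m k * A) * adj U"
    by (rule conj_mult[OF U vu powc[OF A] A])
  finally show ?case by simp
qed

lemma adj_conj:
  assumes U: "U \<in> carrier_mat d d" and A: "A \<in> carrier_mat d d"
  shows "adj (U * A * adj U) = U * adj A * adj U"
proof -
  have V: "adj U \<in> carrier_mat d d" using U by (rule adj_carrier)
  have "adj (U * A * adj U) = adj (adj U) * adj (U * A)"
    by (rule adj_mult[OF mult_carrier_mat[OF U A] V])
  also have "adj (U * A) = adj A * adj U" by (rule adj_mult[OF U A])
  also have "adj (adj U) * (adj A * adj U) = U * adj A * adj U"
    using assoc_mult_mat[OF U adj_carrier[OF A] V] by simp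
  finally show ?thesis .
qed

lemma trace_conj:
  assumes U: "U \<in> carrier_mat d d" and vu: "adj U * U = 1\<^sub>m d" and X: "X \<in> carrier_mat d d"
  shows "mtrace (U * X * adj U) = mtrace X"
proof -
  have V: "adj U \<in> carrier_mat d d" using U by (rule adj_carrier)
  have "mtrace ((U * X) * adj U) = mtrace (adj U * (U * X))"
    by (rule mtrace_comm[OF mult_carrier_mat[OF U X] V])
  also have "adj U * (U * X) = (adj U * U) * X" by (rule assoc_mult_mat[OF V U X, symmetric])
  also have "\<dots> = X" using vu X by simp
  finally show ?thesis .
qed

lemma dsum_zero:
  fixes f :: "'a \<Rightarrow> 'b \<Rightarrow> real"
  assumes "finite A" "finite B" "\<And>a b. a \<in> A \<Longrightarrow> b \<in> B \<Longrightarrow> f a b \<ge> 0"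
    "(\<Sum>a\<in>A. \<Sum>b\<in>B. f a b) = 0" "a \<in> A" "b \<in> B"
  shows "f a b = 0"
proof -
  have "(\<Sum>b\<in>B. f a b) = 0"
    using assms(4) assms(5) assms(1) assms(3) by (subst (asm) sum_nonneg_eq_0_iff) (auto intro: sum_nonneg)
  then show ?thesis using assms(2,3,5,6) by (subst (asm) sum_nonneg_eq_0_iff) auto
qed

lemma powr_01:
  fixes x \<alpha> :: real
  assumes "0 \<le> x" "x \<le> 1" "\<alpha> > 0" "\<alpha> \<noteq> 1" "x powr \<alpha> = x"
  shows "x = 0 \<or> x = 1"
proof (rule ccontr)
  assume "\<not> (x = 0 \<or> x = 1)"
  then have x: "0 < x" "x \<noteq> 1" using assms by auto
  have e1: "x powr (1::real) = x" using x by simp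
  have "x powr \<alpha> = x powr 1" by (rule trans[OF assms(5) e1[symmetric]])
  then have "\<alpha> = 1" using powr_inj[OF x, of \<alpha> 1] by blast
  then show False using assms by simp
qed

theorem theorem1:
  fixes dL n :: nat and \<alpha> :: real and U :: "complex mat"
  assumes "dL \<ge> 2" and "n \<ge> 1" and "\<alpha> > 0" and "\<alpha> \<noteq> 1"
    and "unitary_mat (dL ^ n) U"
  shows "clifford_entropy dL n \<alpha> U = 0 \<longleftrightarrow> U \<in> clifford_group dL n"
proof -
  have dL0: "dL > 0" using assms(1) by simp
  define d where "d = dL ^ n"
  have d0: "d > 0" using dL0 unfolding d_def by simp
  define P where "P = pts dL n"
  have finP: "finite P" unfolding P_def by (rule finite_pts)
  have cardP: "card P = d^2" unfolding P_def d_def card_pts by (metis power_mult mult.commute)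
  have U: "U \<in> carrier_mat d d" and uv: "U * adj U = 1\<^sub>m d" and vu: "adj U * U = 1\<^sub>m d"
    using assms(5) unfolding unitary_mat_def d_def by auto
  have V: "adj U \<in> carrier_mat d d" by (rule adj_carrier[OF U])
  have Dc: "Dop dL a \<in> carrier_mat d d" if "a \<in> P" for a
    using Dop_carrier[of dL a] pts_length[of a dL n] that unfolding P_def d_def by simp
  define M where "M b = U * Dop dL b * adj U" for b
  have Mc: "M b \<in> carrier_mat d d" if "b \<in> P" for b
    unfolding M_def by (rule mult_carrier_mat[OF mult_carrier_mat[OF U Dc[OF that]] V])
  have cC: "charC dL n U a b = hs (Dop dL a) (M b) / of_nat d" if a: "a \<in> P" and b: "b \<in> P" for a b
  proof -
    have Va: "adj (Dop dL a) \<in> carrier_mat d d" by (rule adj_carrier[OF Dc[OF a]])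
    have "adj (Dop dL a) * U * Dop dL b * adj U = adj (Dop dL a) * (U * Dop dL b) * adj U"
      by (simp only: assoc_mult_mat[OF Va U Dc[OF b]])
    also have "\<dots> = adj (Dop dL a) * (U * Dop dL b * adj U)"
      by (rule assoc_mult_mat[OF Va mult_carrier_mat[OF U Dc[OF b]] V])
    finally have "mtrace (adj (Dop dL a) * U * Dop dL b * adj U) = hs (Dop dL a) (M b)"
      using hs_trace[OF Dc[OF a] Mc[OF b]] unfolding M_def by simp
    then show ?thesis unfolding charC_def d_def by simp
  qed
  have froM: "fro (M b) = real d" if b: "b \<in> P" for b
  proof -
    have Db: "Dop dL b \<in> carrier_mat d d" by (rule Dc[OF b])
    have "complex_of_real (fro (M b)) = hs (M b) (M b)" by (simp add: hs_self)
    also have "\<dots> = mtrace (adj (M b) * M b)" by (rule hs_trace[OF Mc[OF b] Mc[OF b], symmetric])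
    also have "adj (M b) * M b = U * (adj (Dop dL b) * Dop dL b) * adj U"
      unfolding M_def adj_conj[OF U Db] by (rule conj_mult[OF U vu adj_carrier[OF Db] Db])
    also have "mtrace \<dots> = mtrace (adj (Dop dL b) * Dop dL b)"
      by (rule trace_conj[OF U vu mult_carrier_mat[OF adj_carrier[OF Db] Db]])
    also have "\<dots> = hs (Dop dL b) (Dop dL b)" by (rule hs_trace[OF Db Db])
    also have "\<dots> = of_nat d" using orth[OF dL0, of b n b] b unfolding P_def d_def by simp
    finally have "complex_of_real (fro (M b)) = complex_of_real (real d)" by simp
    then show ?thesis by (simp only: of_real_eq_iff)
  qed
  define x where "x a b = charD dL n U a b" for a b
  have x_eq: "x a b = (cmod (hs (Dop dL a) (M b)))^2 / (real d)^2" if a: "a \<in> P" and b: "b \<in> P" for a b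
    unfolding x_def charD_def cC[OF a b] by (simp add: norm_divide power_divide)
  have x_nn: "0 \<le> x a b" for a b unfolding x_def charD_def by simp
  have colsum: "(\<Sum>a\<in>P. x a b) = 1" if b: "b \<in> P" for b
  proof -
    have "(\<Sum>a\<in>P. x a b) = (\<Sum>a\<in>P. (cmod (hs (Dop dL a) (M b)))^2 / (real d)^2)"
      by (rule sum.cong[OF refl]) (rule x_eq[OF _ b])
    also have "\<dots> = (\<Sum>a\<in>P. (cmod (hs (Dop dL a) (M b)))^2) / (real d)^2"
      by (rule sum_divide_distrib[symmetric])
    also have "(\<Sum>a\<in>P. (cmod (hs (Dop dL a) (M b)))^2) = real d * real d"
      using parseval[OF dL0, of "M b" n] Mc[OF b] froM[OF b] unfolding P_def d_def by simp
    finally show ?thesis using d0 by (simp add: power2_eq_square)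
  qed
  have x_le1: "x a b \<le> 1" if a: "a \<in> P" and b: "b \<in> P" for a b
    using member_le_sum[of a P "\<lambda>a. x a b", OF a _ finP] x_nn colsum[OF b] by simp
  have total: "(\<Sum>a\<in>P. \<Sum>b\<in>P. x a b) = (real d)^2"
  proof -
    have "(\<Sum>a\<in>P. \<Sum>b\<in>P. x a b) = (\<Sum>b\<in>P. \<Sum>a\<in>P. x a b)" by (rule sum.swap)
    also have "\<dots> = (\<Sum>b\<in>P. 1)" by (rule sum.cong[OF refl]) (rule colsum)
    also have "\<dots> = (real d)^2" using cardP by simp
    finally show ?thesis .
  qed
  have HA: "clifford_entropy dL n \<alpha> U = 0 \<longleftrightarrow> (\<Sum>a\<in>P. \<Sum>b\<in>P. x a b powr \<alpha>) = (real d)^2"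
  proof -
    define S where "S = (\<Sum>a\<in>P. \<Sum>b\<in>P. x a b powr \<alpha>)"
    have "clifford_entropy dL n \<alpha> U = 1 / (\<alpha> - 1) * (1 - 1 / (real d)\<^sup>2 * S)"
      unfolding clifford_entropy_def S_def x_def P_def d_def by simp
    moreover have "1 / (\<alpha> - 1) \<noteq> 0" using assms(4) by simp
    moreover have "(1 - 1 / (real d)\<^sup>2 * S = 0) \<longleftrightarrow> S = (real d)^2" using d0 by (auto simp: field_simps)
    ultimately show ?thesis unfolding S_def by simp
  qed
  have HB: "(\<Sum>a\<in>P. \<Sum>b\<in>P. x a b powr \<alpha>) = (real d)^2 \<longleftrightarrow> (\<forall>a\<in>P. \<forall>b\<in>P. x a b = 0 \<or> x a b = 1)"
  proof
    assume all: "\<forall>a\<in>P. \<forall>b\<in>P. x a b = 0 \<or> x a b = 1"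
    have "(\<Sum>a\<in>P. \<Sum>b\<in>P. x a b powr \<alpha>) = (\<Sum>a\<in>P. \<Sum>b\<in>P. x a b)"
    proof (rule sum.cong[OF refl], rule sum.cong[OF refl])
      fix a b assume "a \<in> P" "b \<in> P"
      then have "x a b = 0 \<or> x a b = 1" using all by blast
      then show "x a b powr \<alpha> = x a b" by auto
    qed
    then show "(\<Sum>a\<in>P. \<Sum>b\<in>P. x a b powr \<alpha>) = (real d)^2" using total by simp
  next
    assume S: "(\<Sum>a\<in>P. \<Sum>b\<in>P. x a b powr \<alpha>) = (real d)^2"
    define s :: real where "s = (if \<alpha> > 1 then 1 else -1)"
    define \<delta> where "\<delta> a b = s * (x a b - x a b powr \<alpha>)" for a b
    have s0: "s \<noteq> 0" unfolding s_def by simp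
    have \<delta>nn: "\<delta> a b \<ge> 0" if a: "a \<in> P" and b: "b \<in> P" for a b
    proof (cases "\<alpha> > 1")
      case True
      have "x a b powr \<alpha> \<le> x a b powr 1" by (rule powr_mono') (use True x_nn x_le1[OF a b] in auto)
      also have "x a b powr 1 = x a b" using x_nn[of a b] by (cases "x a b = 0") auto
      finally show ?thesis unfolding \<delta>_def s_def using True by simp
    next
      case False
      then have a1: "\<alpha> \<le> 1" by simp
      have "x a b powr 1 \<le> x a b powr \<alpha>" by (rule powr_mono') (use a1 x_nn x_le1[OF a b] in auto)
      moreover have "x a b powr 1 = x a b" using x_nn[of a b] by (cases "x a b = 0") auto
      ultimately show ?thesis unfolding \<delta>_def s_def using False by simp
    qed
    have "(\<Sum>a\<in>P. \<Sum>b\<in>P. \<delta> a b) = s * ((\<Sum>a\<in>P. \<Sum>b\<in>P. x a b) - (\<Sum>a\<in>P. \<Sum>b\<in>P. x a b powr \<alpha>))"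
      unfolding \<delta>_def by (simp add: sum_distrib_left sum_subtractf right_diff_distrib)
    also have "\<dots> = 0" using S total by simp
    finally have sum0: "(\<Sum>a\<in>P. \<Sum>b\<in>P. \<delta> a b) = 0" .
    show "\<forall>a\<in>P. \<forall>b\<in>P. x a b = 0 \<or> x a b = 1"
    proof (intro ballI)
      fix a b assume a: "a \<in> P" and b: "b \<in> P"
      have "\<delta> a b = 0" by (rule dsum_zero[OF finP finP \<delta>nn sum0 a b])
      then have "x a b powr \<alpha> = x a b" unfolding \<delta>_def using s0 by simp
      then show "x a b = 0 \<or> x a b = 1" by (rule powr_01[OF x_nn x_le1[OF a b] assms(3) assms(4)])
    qed
  qed
  have HC: "(\<forall>a\<in>P. \<forall>b\<in>P. x a b = 0 \<or> x a b = 1) \<longleftrightarrow> U \<in> clifford_group dL n"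
  proof
    assume all: "\<forall>a\<in>P. \<forall>b\<in>P. x a b = 0 \<or> x a b = 1"
    show "U \<in> clifford_group dL n" unfolding clifford_group_def
    proof (intro CollectI conjI ballI)
      show "unitary_mat (dL ^ n) U" by (rule assms(5))
    next
      fix b assume bP0: "b \<in> pts dL n"
      then have b: "b \<in> P" unfolding P_def .
      have "\<exists>a0\<in>P. x a0 b = 1"
      proof (rule ccontr)
        assume "\<not> (\<exists>a0\<in>P. x a0 b = 1)"
        then have "\<forall>a\<in>P. x a b = 0" using all b by blast
        then have "(\<Sum>a\<in>P. x a b) = 0" by simp
        then show False using colsum[OF b] by simp
      qed
      then obtain a0 where a0: "a0 \<in> P" "x a0 b = 1" by blast
      have rest: "(\<Sum>a\<in>P - {a0}. x a b) = 0"
        using sum.remove[OF finP a0(1), of "\<lambda>a. x a b"] colsum[OF b] a0(2) by simp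
      have zero: "x a b = 0" if "a \<in> P" "a \<noteq> a0" for a
      proof -
        have "\<forall>a\<in>P - {a0}. x a b = 0"
          using rest finP x_nn by (subst (asm) sum_nonneg_eq_0_iff) auto
        then show ?thesis using that by blast
      qed
      have hs0: "hs (Dop dL a) (M b) = 0" if "a \<in> P" "a \<noteq> a0" for a
      proof -
        have "(cmod (hs (Dop dL a) (M b)))^2 / (real d)^2 = 0" using zero[OF that] x_eq[OF that(1) b] by simp
        then show ?thesis using d0 by simp
      qed
      define c where "c = hs (Dop dL a0) (M b) / of_nat d"
      define N where "N = M b - c \<cdot>\<^sub>m Dop dL a0"
      have cD: "c \<cdot>\<^sub>m Dop dL a0 \<in> carrier_mat d d" by (rule smult_carrier_mat[OF Dc[OF a0(1)]])
      have Nc: "N \<in> carrier_mat d d" unfolding N_def by (rule minus_carrier_mat[OF cD])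
      have hsN: "hs (Dop dL a) N = 0" if a: "a \<in> P" for a
      proof -
        have "hs (Dop dL a) N = hs (Dop dL a) (M b) - hs (Dop dL a) (c \<cdot>\<^sub>m Dop dL a0)"
          unfolding N_def by (rule hs_minus[OF Mc[OF b] cD Dc[OF a]])
        also have "hs (Dop dL a) (c \<cdot>\<^sub>m Dop dL a0) = c * hs (Dop dL a) (Dop dL a0)"
          by (rule hs_smult) (use a a0(1) in \<open>simp_all add: P_def pts_length\<close>)
        also have "hs (Dop dL a) (Dop dL a0) = (if a = a0 then of_nat d else 0)"
          using orth[OF dL0, of a n a0] a a0(1) unfolding P_def d_def by simp
        finally show ?thesis using hs0[OF a] d0 unfolding c_def by (cases "a = a0") auto
      qed
      have "(\<Sum>a\<in>P. (cmod (hs (Dop dL a) N))^2) = real d * fro N"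
        using parseval[OF dL0, of N n] Nc unfolding P_def d_def by simp
      then have "real d * fro N = 0" using hsN by simp
      then have froN: "fro N = 0" using d0 by simp
      have Meq: "M b = c \<cdot>\<^sub>m Dop dL a0"
      proof (rule eq_matI)
        fix i j assume "i < dim_row (c \<cdot>\<^sub>m Dop dL a0)" "j < dim_col (c \<cdot>\<^sub>m Dop dL a0)"
        then have ij: "i < d" "j < d" using Dc[OF a0(1)] by auto
        have "N $$ (i,j) = 0" by (rule fro_zero[OF froN]) (use Nc ij in auto)
        then show "M b $$ (i,j) = (c \<cdot>\<^sub>m Dop dL a0) $$ (i,j)"
          unfolding N_def using ij Mc[OF b] Dc[OF a0(1)] by (simp del: Dop_dim)
      qed (use Mc[OF b] Dc[OF a0(1)] in auto)
      have one_b: "Dop dL b ^\<^sub>m dL = 1\<^sub>m d"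
        using Dop_pow[OF dL0, of b] pts_length[of b dL n] b unfolding P_def d_def by simp
      have one_a0: "Dop dL a0 ^\<^sub>m dL = 1\<^sub>m d"
        using Dop_pow[OF dL0, of a0] pts_length[of a0 dL n] a0(1) unfolding P_def d_def by simp
      have "M b ^\<^sub>m dL = U * (Dop dL b ^\<^sub>m dL) * adj U"
        unfolding M_def by (rule conj_pow[OF U vu uv Dc[OF b]])
      also have "\<dots> = 1\<^sub>m d" unfolding one_b using U uv by simp
      finally have L: "M b ^\<^sub>m dL = 1\<^sub>m d" .
      have R: "(c \<cdot>\<^sub>m Dop dL a0) ^\<^sub>m dL = c ^ dL \<cdot>\<^sub>m 1\<^sub>m d"
        unfolding smult_pow[OF Dc[OF a0(1)]] one_a0 ..
      have "(1\<^sub>m d :: complex mat) = c ^ dL \<cdot>\<^sub>m 1\<^sub>m d" using L R Meq by simp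
      then have "(1\<^sub>m d :: complex mat) $$ (0,0) = (c ^ dL \<cdot>\<^sub>m 1\<^sub>m d) $$ (0,0)" by simp
      then have cdl: "c ^ dL = 1" using d0 by simp
      have "c \<in> (\<lambda>k. cis (2 * pi * real k / real dL)) ` {..<dL}"
        using bij_betw_roots_unity[OF dL0] cdl unfolding bij_betw_def by auto
      then obtain s where s: "s < dL" "c = omega dL ^ s" by (auto simp: omega_pow)
      show "\<exists>s<dL. \<exists>a'\<in>pts dL n. U * Dop dL b * adj U = omega dL ^ s \<cdot>\<^sub>m Dop dL a'"
        using s a0(1) Meq unfolding M_def P_def by blast
    qed
  next
    assume cl: "U \<in> clifford_group dL n"
    show "\<forall>a\<in>P. \<forall>b\<in>P. x a b = 0 \<or> x a b = 1"
    proof (intro ballI)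
      fix a b assume a: "a \<in> P" and b: "b \<in> P"
      obtain s a' where s: "s < dL" "a' \<in> P" "M b = omega dL ^ s \<cdot>\<^sub>m Dop dL a'"
        using cl b unfolding clifford_group_def M_def P_def by blast
      have "hs (Dop dL a) (M b) = omega dL ^ s * hs (Dop dL a) (Dop dL a')"
        unfolding s(3) by (rule hs_smult) (use a s(2) in \<open>simp_all add: P_def pts_length\<close>)
      also have "hs (Dop dL a) (Dop dL a') = (if a = a' then of_nat d else 0)"
        using orth[OF dL0, of a n a'] a s(2) unfolding P_def d_def by simp
      finally have "x a b = (if a = a' then 1 else 0)"
        using x_eq[OF a b] d0 by (simp add: norm_mult)
      then show "x a b = 0 \<or> x a b = 1" by simp
    qed
  qed
  show ?thesis using HA HB HC by simp
qed

end
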